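(* Let $K\subseteq\mathbb R^d$ be a compact set satisfying LMI($1$). For every $k\in\mathbb N$ there is $C_k>0$ such that for all $\varepsilon\in(0,1)$, $x\in\partial K$, $r>0$ and every polynomial $P$ of degree at most $k$, \[\sum_{|\alpha|=k}\frac{|\partial^\alpha P(0)|}{\alpha!}\le\frac{C_k}{r^k}\sup\{|P(y)|:y\in A_{x,\varepsilon},\ |y|\le r\}.\]
   Context: $A_{x,\varepsilon}=\varepsilon^{-1}(K-x)\cup\{y\in\mathbb R^d:|y|\ge\varepsilon^{-1}\}$. $K$ satisfies LMI($1$) if there are $\varepsilon_0>0$ and constants $c_k\ge1$ such that for every $k$, every polynomial $P$ of degree $\le k$, every $\varepsilon\in(0,\varepsilon_0)$ and every $x_0\in K$: $|\nabla P(x_0)|\le c_k\varepsilon^{-1}\sup\{|P(y)|:y\in B(x_0,\varepsilon)\cap K\}$ ($B$ the closed ball). *)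

theory Defs
  imports "HOL-Analysis.Analysis"
begin

text \<open>Points of R^d are vectors real^'d (d = CARD('d)). Multi-indices are
functions 'd \<Rightarrow> nat; |alpha| = sum alpha UNIV.\<close>

definition mono :: "('d::finite \<Rightarrow> nat) \<Rightarrow> real^'d \<Rightarrow> real" where
  "mono \<alpha> y = (\<Prod>i\<in>UNIV. (y $ i) ^ (\<alpha> i))"

definition midx :: "nat \<Rightarrow> ('d::finite \<Rightarrow> nat) set" where
  "midx k = {\<alpha>. sum \<alpha> UNIV \<le> k}"

definition polyfun :: "nat \<Rightarrow> (('d::finite \<Rightarrow> nat) \<Rightarrow> real) \<Rightarrow> real^'d \<Rightarrow> real" where
  "polyfun k c y = (\<Sum>\<alpha>\<in>midx k. c \<alpha> * mono \<alpha> y)"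

definition is_poly_deg :: "nat \<Rightarrow> (real^'d::finite \<Rightarrow> real) \<Rightarrow> bool" where
  "is_poly_deg k P \<longleftrightarrow> (\<exists>c. P = polyfun k c)"

definition grad :: "(real^'d::finite \<Rightarrow> real) \<Rightarrow> real^'d \<Rightarrow> real^'d" where
  "grad P x = (\<chi> i. deriv (\<lambda>t. P (x + t *\<^sub>R axis i 1)) 0)"

definition LMI1 :: "(real^'d::finite) set \<Rightarrow> bool" where
  "LMI1 K \<longleftrightarrow> (\<exists>\<epsilon>0>0. \<exists>c::nat \<Rightarrow> real. (\<forall>k. c k \<ge> 1) \<and>
     (\<forall>k P \<epsilon> x0. is_poly_deg k P \<and> 0 < \<epsilon> \<and> \<epsilon> < \<epsilon>0 \<and> x0 \<in> K \<longrightarrow>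
        norm (grad P x0) \<le> c k / \<epsilon> * Sup {\<bar>P y\<bar> | y. y \<in> cball x0 \<epsilon> \<inter> K}))"

definition Aset :: "(real^'d::finite) set \<Rightarrow> real^'d \<Rightarrow> real \<Rightarrow> (real^'d) set" where
  "Aset K x \<epsilon> = (\<lambda>y. (1/\<epsilon>) *\<^sub>R (y - x)) ` K \<union> {y. norm y \<ge> 1/\<epsilon>}"

end

theory Submission
  imports Defs
begin

lemma midx_finite: "finite (midx k :: ('d::finite \<Rightarrow> nat) set)"
proof -
  have "midx k \<subseteq> PiE (UNIV::'d set) (\<lambda>_. {..k})"
  proof
    fix \<alpha> assume "\<alpha> \<in> midx k"
    then have "\<alpha> i \<le> k" for i using member_le_sum[of i UNIV \<alpha>] by (simp add: midx_def)
    then show "\<alpha> \<in> PiE UNIV (\<lambda>_. {..k})" by auto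
  qed
  moreover have "finite (PiE (UNIV::'d set) (\<lambda>_. {..k}))" by (rule finite_PiE) auto
  ultimately show ?thesis by (rule finite_subset)
qed

lemma midx_0: "midx 0 = {(\<lambda>_. 0)}"
  by (auto simp: midx_def fun_eq_iff)

lemma mono_0 [simp]: "mono (\<lambda>_. 0) y = 1" by (simp add: mono_def)

lemma polyfun_0: "polyfun 0 c = (\<lambda>y. c (\<lambda>_. 0))"
  by (simp add: fun_eq_iff polyfun_def midx_0)

lemma mono_poly:
  assumes "sum \<gamma> UNIV \<le> n"
  shows "polyfun n (\<lambda>\<beta>. if \<beta> = \<gamma> then 1 else 0) = mono (\<gamma>::'d::finite\<Rightarrow>nat)"
proof -
  have g: "\<gamma> \<in> midx n" using assms by (simp add: midx_def)
  show ?thesis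
  proof (rule ext)
    fix y
    have "(\<Sum>\<beta>\<in>midx n. (if \<beta> = \<gamma> then 1 else 0) * mono \<beta> y) = (\<Sum>\<beta>\<in>midx n. if \<beta> = \<gamma> then mono \<beta> y else 0)"
      by (rule sum.cong) auto
    also have "\<dots> = mono \<gamma> y" by (subst sum.delta[OF midx_finite]) (simp add: g)
    finally show "polyfun n (\<lambda>\<beta>. if \<beta> = \<gamma> then 1 else 0) y = mono \<gamma> y" unfolding polyfun_def .
  qed
qed

lemma is_poly_mono: "sum \<gamma> UNIV \<le> n \<Longrightarrow> is_poly_deg n (mono (\<gamma>::'d::finite\<Rightarrow>nat))"
  unfolding is_poly_deg_def by (rule exI[of _ "\<lambda>\<beta>. if \<beta> = \<gamma> then 1 else 0"]) (simp add: mono_poly)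

lemma is_poly_add:
  assumes "is_poly_deg n P" "is_poly_deg n Q"
  shows "is_poly_deg n (\<lambda>y::real^'d::finite. P y + Q y)"
proof -
  obtain c d where "P = polyfun n c" "Q = polyfun n d" using assms by (auto simp: is_poly_deg_def)
  then have "(\<lambda>y. P y + Q y) = polyfun n (\<lambda>a. c a + d a)"
    by (simp add: fun_eq_iff polyfun_def sum.distrib distrib_right)
  then show ?thesis by (auto simp: is_poly_deg_def)
qed

lemma is_poly_scale:
  assumes "is_poly_deg n P"
  shows "is_poly_deg n (\<lambda>y::real^'d::finite. a * P y)"
proof -
  obtain c where "P = polyfun n c" using assms by (auto simp: is_poly_deg_def)
  then have "(\<lambda>y. a * P y) = polyfun n (\<lambda>b. a * c b)"
    by (simp add: fun_eq_iff polyfun_def sum_distrib_left mult.assoc)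
  then show ?thesis by (auto simp: is_poly_deg_def)
qed

lemma is_poly_zero: "is_poly_deg n (\<lambda>y::real^'d::finite. 0)"
proof -
  have "(\<lambda>y::real^'d. 0) = polyfun n (\<lambda>b. 0)" by (simp add: fun_eq_iff polyfun_def)
  then show ?thesis by (auto simp: is_poly_deg_def)
qed

lemma is_poly_sum:
  assumes "finite I" "\<And>i. i \<in> I \<Longrightarrow> is_poly_deg n (f i)"
  shows "is_poly_deg n (\<lambda>y::real^'d::finite. \<Sum>i\<in>I. f i y)"
  using assms
proof (induction I rule: finite_induct)
  case empty then show ?case by (simp add: is_poly_zero)
next
  case (insert x F)
  then show ?case by (simp add: is_poly_add)
qed

lemma is_poly_deg_mono:
  assumes "is_poly_deg a P" "a \<le> b"
  shows "is_poly_deg b (P :: real^'d::finite \<Rightarrow> real)"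
proof -
  obtain c where P: "P = polyfun a c" using assms by (auto simp: is_poly_deg_def)
  have "is_poly_deg b (\<lambda>y. \<Sum>\<alpha>\<in>midx a. c \<alpha> * mono \<alpha> y)"
    using assms(2) by (intro is_poly_sum is_poly_scale is_poly_mono midx_finite) (auto simp: midx_def)
  then show ?thesis by (simp add: P polyfun_def[abs_def])
qed

lemma mono_add: "mono (\<lambda>i. \<alpha> i + \<beta> i) y = mono \<alpha> y * mono \<beta> y"
  by (simp add: mono_def power_add prod.distrib)

lemma is_poly_mult:
  assumes "is_poly_deg a P" "is_poly_deg b Q"
  shows "is_poly_deg (a+b) (\<lambda>y::real^'d::finite. P y * Q y)"
proof -
  obtain c d where P: "P = polyfun a c" and Q: "Q = polyfun b d" using assms by (auto simp: is_poly_deg_def)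
  have eq: "(\<lambda>y. P y * Q y) = (\<lambda>y. \<Sum>\<alpha>\<in>midx a. \<Sum>\<beta>\<in>midx b. (c \<alpha> * d \<beta>) * mono (\<lambda>i. \<alpha> i + \<beta> i) y)"
    by (simp add: P Q fun_eq_iff polyfun_def sum_product mono_add mult_ac)
  have "is_poly_deg (a+b) (\<lambda>y. \<Sum>\<alpha>\<in>midx a. \<Sum>\<beta>\<in>midx b. (c \<alpha> * d \<beta>) * mono (\<lambda>i. \<alpha> i + \<beta> i) y)"
    by (intro is_poly_sum is_poly_scale is_poly_mono midx_finite) (auto simp: midx_def sum.distrib)
  then show ?thesis by (simp add: eq)
qed

lemma is_poly_const: "is_poly_deg n (\<lambda>y::real^'d::finite. a)"
  using is_poly_scale[OF is_poly_mono[of "\<lambda>_. 0" n], of a] by simp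

lemma is_poly_prod:
  assumes "finite I" "\<And>j. j \<in> I \<Longrightarrow> is_poly_deg (d j) (f j)"
  shows "is_poly_deg (\<Sum>j\<in>I. d j) (\<lambda>y::real^'d::finite. \<Prod>j\<in>I. f j y)"
  using assms
proof (induction I rule: finite_induct)
  case empty then show ?case by (simp add: is_poly_const)
next
  case (insert x F)
  then show ?case by (simp add: is_poly_mult)
qed

lemma is_poly_pow:
  assumes "is_poly_deg a P"
  shows "is_poly_deg (a*m) (\<lambda>y::real^'d::finite. P y ^ m)"
proof (induction m)
  case 0 then show ?case by (simp add: is_poly_const)
next
  case (Suc m)
  then show ?case using is_poly_mult[OF assms Suc] by (simp add: add.commute)
qed

lemma mono_e: "mono (\<lambda>i. if i = j then 1 else 0) z = z $ j"
  by (simp add: mono_def if_distrib[where f="\<lambda>n. _ ^ n"] cong: if_cong)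

lemma is_poly_affine: "is_poly_deg 1 (\<lambda>z::real^'d::finite. a * (z $ j) + b)"
proof -
  have "is_poly_deg 1 (\<lambda>z::real^'d. a * mono (\<lambda>i. if i = j then 1 else 0) z + b)"
    by (intro is_poly_add is_poly_scale is_poly_mono is_poly_const) (simp)
  then show ?thesis by (simp add: mono_e)
qed

lemma is_poly_comp:
  assumes "is_poly_deg k P"
  shows "is_poly_deg k (\<lambda>z::real^'d::finite. P ((1/\<epsilon>) *\<^sub>R (z - x)))"
proof -
  obtain c where P: "P = polyfun k c" using assms by (auto simp: is_poly_deg_def)
  have m: "is_poly_deg k (\<lambda>z. mono \<alpha> ((1/\<epsilon>) *\<^sub>R (z - x)))" if "\<alpha> \<in> midx k" for \<alpha>
  proof -
    have "is_poly_deg (\<Sum>i\<in>UNIV. 1 * \<alpha> i) (\<lambda>z::real^'d. \<Prod>i\<in>UNIV. ((1/\<epsilon>) * (z $ i) + (- x $ i / \<epsilon>)) ^ \<alpha> i)"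
      by (intro is_poly_prod is_poly_pow is_poly_affine) auto
    then have "is_poly_deg k (\<lambda>z::real^'d. \<Prod>i\<in>UNIV. ((1/\<epsilon>) * (z $ i) + (- x $ i / \<epsilon>)) ^ \<alpha> i)"
      by (rule is_poly_deg_mono) (use that in \<open>simp add: midx_def\<close>)
    moreover have "(\<lambda>z::real^'d. \<Prod>i\<in>UNIV. ((1/\<epsilon>) * (z $ i) + (- x $ i / \<epsilon>)) ^ \<alpha> i)
        = (\<lambda>z. mono \<alpha> ((1/\<epsilon>) *\<^sub>R (z - x)))"
      by (simp add: fun_eq_iff mono_def diff_divide_distrib)
    ultimately show ?thesis by simp
  qed
  have "is_poly_deg k (\<lambda>z. \<Sum>\<alpha>\<in>midx k. c \<alpha> * mono \<alpha> ((1/\<epsilon>) *\<^sub>R (z - x)))"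
    by (intro is_poly_sum is_poly_scale m midx_finite)
  then show ?thesis by (simp add: P polyfun_def)
qed

definition Dd :: "'d::finite \<Rightarrow> (real^'d \<Rightarrow> real) \<Rightarrow> real^'d \<Rightarrow> real" where
  "Dd i f z = deriv (\<lambda>t. f (z + t *\<^sub>R axis i 1)) 0"

definition Df :: "real \<Rightarrow> 'd::finite \<Rightarrow> (real^'d \<Rightarrow> real) \<Rightarrow> real^'d \<Rightarrow> real" where
  "Df h i f z = f (z + h *\<^sub>R axis i 1) - f z"

lemma grad_Dd: "grad P x $ i = Dd i P x"
  by (simp add: grad_def Dd_def)

definition sh :: "'d \<Rightarrow> ('d \<Rightarrow> nat) \<Rightarrow> ('d \<Rightarrow> nat)" where
  "sh i \<alpha> = \<alpha>(i := Suc (\<alpha> i))"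
definition dn :: "'d \<Rightarrow> ('d \<Rightarrow> nat) \<Rightarrow> ('d \<Rightarrow> nat)" where
  "dn i \<alpha> = \<alpha>(i := \<alpha> i - 1)"

lemma sum_upd: "sum (\<alpha>(i := v)) (UNIV::'d::finite set) + \<alpha> i = sum \<alpha> UNIV + v"
proof -
  have "sum (\<alpha>(i := v)) (UNIV::'d set) = v + sum (\<alpha>(i := v)) (UNIV - {i})"
    by (subst sum.remove[of UNIV i]) auto
  also have "sum (\<alpha>(i := v)) (UNIV - {i}) = sum \<alpha> (UNIV - {i})"
    by (rule sum.cong) auto
  finally show ?thesis using sum.remove[of UNIV i \<alpha>] by (simp add: add_ac)
qed

lemma mono_split: "mono \<alpha> y = (y $ i) ^ (\<alpha> i) * (\<Prod>j\<in>UNIV - {i}. (y $ j) ^ (\<alpha> j))"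
  unfolding mono_def by (subst prod.remove[of UNIV i]) auto

lemma mono_upd: "mono (\<alpha>(i := v)) y = (y $ i) ^ v * (\<Prod>j\<in>UNIV - {i}. (y $ j) ^ (\<alpha> j))"
proof -
  have "(\<Prod>j\<in>UNIV - {i}. (y $ j) ^ ((\<alpha>(i := v)) j)) = (\<Prod>j\<in>UNIV - {i}. (y $ j) ^ (\<alpha> j))"
    by (rule prod.cong) auto
  then show ?thesis using mono_split[of "\<alpha>(i := v)" y i] by simp
qed

lemma mono_line: "mono \<alpha> (y + t *\<^sub>R axis i 1) = (y $ i + t) ^ (\<alpha> i) * (\<Prod>j\<in>UNIV - {i}. (y $ j) ^ (\<alpha> j))"
proof -
  have "(\<Prod>j\<in>UNIV - {i}. ((y + t *\<^sub>R axis i 1) $ j) ^ (\<alpha> j)) = (\<Prod>j\<in>UNIV - {i}. (y $ j) ^ (\<alpha> j))"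
    by (rule prod.cong) (auto simp: axis_def)
  then show ?thesis using mono_split[of \<alpha> "y + t *\<^sub>R axis i 1" i] by simp
qed

lemma mono_deriv:
  "((\<lambda>t. mono \<alpha> (y + t *\<^sub>R axis i 1)) has_real_derivative (of_nat (\<alpha> i) * mono (dn i \<alpha>) y)) (at 0)"
proof -
  define R where "R = (\<Prod>j\<in>UNIV - {i}. (y $ j) ^ (\<alpha> j))"
  have "((\<lambda>t. (y $ i + t) ^ (\<alpha> i) * R) has_real_derivative (of_nat (\<alpha> i) * ((y $ i) ^ (\<alpha> i - 1) * R))) (at 0)"
    by (auto intro!: derivative_eq_intros)
  then show ?thesis by (simp add: mono_line mono_upd dn_def R_def)
qed

lemma poly_deriv:
  "((\<lambda>t. polyfun n c (y + t *\<^sub>R axis i 1)) has_real_derivative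
     (\<Sum>\<alpha>\<in>midx n. c \<alpha> * (of_nat (\<alpha> i) * mono (dn i \<alpha>) y))) (at 0)"
  unfolding polyfun_def
  by (rule DERIV_sum, rule DERIV_cmult, rule mono_deriv)

lemma Dd_polyfun: "Dd i (polyfun n c) y = (\<Sum>\<alpha>\<in>midx n. c \<alpha> * (of_nat (\<alpha> i) * mono (dn i \<alpha>) y))"
  unfolding Dd_def by (rule DERIV_imp_deriv[OF poly_deriv])

lemma reindex:
  "(\<Sum>\<alpha>\<in>midx (Suc n). c \<alpha> * (of_nat (\<alpha> i) * mono (dn i \<alpha>) y))
   = polyfun n (\<lambda>\<beta>. of_nat (Suc (\<beta> i)) * c (sh i \<beta>)) (y::real^'d::finite)"
proof -
  let ?T = "{\<alpha>\<in>midx (Suc n). 0 < \<alpha> i}"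
  have "(\<Sum>\<alpha>\<in>midx (Suc n). c \<alpha> * (of_nat (\<alpha> i) * mono (dn i \<alpha>) y))
      = (\<Sum>\<alpha>\<in>?T. c \<alpha> * (of_nat (\<alpha> i) * mono (dn i \<alpha>) y))"
    by (rule sum.mono_neutral_right) (auto simp: midx_finite)
  also have "\<dots> = (\<Sum>\<beta>\<in>midx n. of_nat (Suc (\<beta> i)) * c (sh i \<beta>) * mono \<beta> y)"
  proof (rule sum.reindex_bij_witness[where j="dn i" and i="sh i"])
    fix \<beta> :: "'d \<Rightarrow> nat" assume "\<beta> \<in> midx n"
    then show "dn i (sh i \<beta>) = \<beta>" "sh i \<beta> \<in> ?T"
      using sum_upd[of \<beta> i "Suc (\<beta> i)"] by (auto simp: dn_def sh_def midx_def)
  next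
    fix \<alpha> :: "'d \<Rightarrow> nat" assume a: "\<alpha> \<in> ?T"
    then show "sh i (dn i \<alpha>) = \<alpha>" by (auto simp: dn_def sh_def)
    show "dn i \<alpha> \<in> midx n"
      using a sum_upd[of \<alpha> i "\<alpha> i - 1"] by (auto simp: dn_def midx_def)
    show "of_nat (Suc (dn i \<alpha> i)) * c (sh i (dn i \<alpha>)) * mono (dn i \<alpha>) y = c \<alpha> * (of_nat (\<alpha> i) * mono (dn i \<alpha>) y)"
      using a by (auto simp: dn_def sh_def)
  qed
  finally show ?thesis by (simp add: polyfun_def)
qed

lemma Dd_polyfun_Suc: "Dd i (polyfun (Suc n) c) = polyfun n (\<lambda>\<beta>. of_nat (Suc (\<beta> i)) * c (sh i \<beta>))"
  by (rule ext) (simp add: Dd_polyfun reindex)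

lemma Dd_polyfun_0: "Dd i (polyfun 0 c) = (\<lambda>y. 0)"
  by (rule ext) (simp add: Dd_polyfun midx_0)

lemma Dd_poly: "is_poly_deg k P \<Longrightarrow> is_poly_deg k (Dd i P)"
proof -
  assume "is_poly_deg k P"
  then obtain c where P: "P = polyfun k c" by (auto simp: is_poly_deg_def)
  show ?thesis
  proof (cases k)
    case 0 then show ?thesis by (simp add: P Dd_polyfun_0 is_poly_zero)
  next
    case (Suc n)
    have "is_poly_deg n (Dd i P)" by (auto simp: P Suc Dd_polyfun_Suc is_poly_deg_def)
    then show ?thesis by (rule is_poly_deg_mono) (simp add: Suc)
  qed
qed

lemma pow_diff:
  "(u + h) ^ a - u ^ a = of_nat a * h * u ^ (a - 1) + (\<Sum>l<a - 1. of_nat (a choose l) * h ^ (a - l) * u ^ l)"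
  for u h :: real
proof (cases a)
  case 0 then show ?thesis by simp
next
  case (Suc b)
  show ?thesis
  proof (cases b)
    case 0 then show ?thesis using Suc by simp
  next
    case (Suc m)
    have "(u + h) ^ a = (\<Sum>l\<le>a. of_nat (a choose l) * u ^ l * h ^ (a - l))"
      by (rule binomial_ring)
    also have "\<dots> = (\<Sum>l<a - 1. of_nat (a choose l) * u ^ l * h ^ (a - l))
        + of_nat a * u ^ (a - 1) * h + u ^ a"
      using \<open>a = Suc b\<close> Suc by (simp add: lessThan_Suc_atMost[symmetric] del: lessThan_Suc_atMost) 
    finally show ?thesis by (simp add: mult_ac)
  qed
qed

lemma mono_diff:
  "mono \<alpha> (y + h *\<^sub>R axis i 1) - mono \<alpha> y = of_nat (\<alpha> i) * h * mono (dn i \<alpha>) y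
    + (\<Sum>l<\<alpha> i - 1. of_nat (\<alpha> i choose l) * h ^ (\<alpha> i - l) * mono (\<alpha>(i := l)) y)"
proof -
  define R where "R = (\<Prod>j\<in>UNIV - {i}. (y $ j) ^ (\<alpha> j))"
  have "mono \<alpha> (y + h *\<^sub>R axis i 1) - mono \<alpha> y = ((y $ i + h) ^ (\<alpha> i) - (y $ i) ^ (\<alpha> i)) * R"
    by (simp add: mono_line mono_split[of \<alpha> y i] R_def algebra_simps)
  also have "\<dots> = of_nat (\<alpha> i) * h * ((y $ i) ^ (\<alpha> i - 1) * R)
      + (\<Sum>l<\<alpha> i - 1. of_nat (\<alpha> i choose l) * h ^ (\<alpha> i - l) * ((y $ i) ^ l * R))"
    by (simp add: pow_diff ring_distribs sum_distrib_left sum_distrib_right mult_ac)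
  finally show ?thesis by (simp add: mono_upd dn_def R_def)
qed

definition topz :: "nat \<Rightarrow> (real^'d::finite \<Rightarrow> real) \<Rightarrow> bool" where
  "topz n P \<longleftrightarrow> (\<exists>d. P = polyfun n d \<and> (\<forall>\<beta>. sum \<beta> UNIV = n \<longrightarrow> d \<beta> = 0))"

lemma topz_add:
  assumes "topz n P" "topz n Q"
  shows "topz n (\<lambda>y. P y + Q y)"
proof -
  obtain c d where "P = polyfun n c" "\<forall>\<beta>. sum \<beta> UNIV = n \<longrightarrow> c \<beta> = 0"
    "Q = polyfun n d" "\<forall>\<beta>. sum \<beta> UNIV = n \<longrightarrow> d \<beta> = 0" using assms by (auto simp: topz_def)
  moreover have "(\<lambda>y. polyfun n c y + polyfun n d y) = polyfun n (\<lambda>a. c a + d a)"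
    by (simp add: fun_eq_iff polyfun_def sum.distrib distrib_right)
  ultimately show ?thesis unfolding topz_def by (intro exI[of _ "\<lambda>a. c a + d a"]) auto
qed

lemma topz_scale:
  assumes "topz n P"
  shows "topz n (\<lambda>y. a * P y)"
proof -
  obtain c where "P = polyfun n c" "\<forall>\<beta>. sum \<beta> UNIV = n \<longrightarrow> c \<beta> = 0"
    using assms by (auto simp: topz_def)
  moreover have "(\<lambda>y. a * polyfun n c y) = polyfun n (\<lambda>b. a * c b)"
    by (simp add: fun_eq_iff polyfun_def sum_distrib_left mult.assoc)
  ultimately show ?thesis unfolding topz_def by (intro exI[of _ "\<lambda>b. a * c b"]) auto
qed

lemma topz_zero: "topz n (\<lambda>y. 0)"
proof -
  have "(\<lambda>y::real^'d. 0) = polyfun n (\<lambda>b. 0)" by (simp add: fun_eq_iff polyfun_def)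
  then show ?thesis unfolding topz_def by (intro exI[of _ "\<lambda>b. 0"]) auto
qed

lemma topz_sum:
  assumes "finite I" "\<And>i. i \<in> I \<Longrightarrow> topz n (f i)"
  shows "topz n (\<lambda>y. \<Sum>i\<in>I. f i y)"
  using assms
proof (induction I rule: finite_induct)
  case empty then show ?case by (simp add: topz_zero)
next
  case (insert x F)
  then show ?case by (simp add: topz_add)
qed

lemma topz_mono: "sum \<gamma> UNIV < n \<Longrightarrow> topz n (mono \<gamma>)"
  unfolding topz_def
  by (rule exI[of _ "\<lambda>\<beta>. if \<beta> = \<gamma> then 1 else 0"]) (auto simp: mono_poly)

lemma Df_polyfun_Suc:
  fixes c :: "('d::finite \<Rightarrow> nat) \<Rightarrow> real"
  shows
  "\<exists>c'. Df h i (polyfun (Suc n) c) = polyfun n c' \<and>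
     (\<forall>\<beta>. sum \<beta> UNIV = n \<longrightarrow> c' \<beta> = h * of_nat (Suc (\<beta> i)) * c (sh i \<beta>))"
proof -
  define Rem where "Rem = (\<lambda>y::real^'d. \<Sum>\<alpha>\<in>midx (Suc n). c \<alpha> *
      (\<Sum>l<\<alpha> i - 1. of_nat (\<alpha> i choose l) * h ^ (\<alpha> i - l) * mono (\<alpha>(i := l)) y))"
  have "topz n Rem"
    unfolding Rem_def
  proof (intro topz_sum topz_scale midx_finite finite_lessThan)
    fix \<alpha> l assume a: "\<alpha> \<in> midx (Suc n)" and l: "l \<in> {..<\<alpha> i - 1}"
    have "sum (\<alpha>(i := l)) UNIV < n"
      using sum_upd[of \<alpha> i l] a l by (auto simp: midx_def)
    then show "topz n (mono (\<alpha>(i := l)))" by (rule topz_mono)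
  qed
  then obtain d where d: "Rem = polyfun n d" "\<forall>\<beta>. sum \<beta> UNIV = n \<longrightarrow> d \<beta> = 0"
    by (auto simp: topz_def)
  have eq: "Df h i (polyfun (Suc n) c) y = h * polyfun n (\<lambda>\<beta>. of_nat (Suc (\<beta> i)) * c (sh i \<beta>)) y + Rem y" for y
  proof -
    have "Df h i (polyfun (Suc n) c) y = (\<Sum>\<alpha>\<in>midx (Suc n). c \<alpha> * (mono \<alpha> (y + h *\<^sub>R axis i 1) - mono \<alpha> y))"
      by (simp add: Df_def polyfun_def sum_subtractf right_diff_distrib)
    also have "\<dots> = h * (\<Sum>\<alpha>\<in>midx (Suc n). c \<alpha> * (of_nat (\<alpha> i) * mono (dn i \<alpha>) y)) + Rem y"
      by (simp add: mono_diff Rem_def distrib_left sum.distrib sum_distrib_left mult_ac)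
    finally show ?thesis by (simp add: reindex)
  qed
  have "Df h i (polyfun (Suc n) c) = polyfun n (\<lambda>\<beta>. h * (of_nat (Suc (\<beta> i)) * c (sh i \<beta>)) + d \<beta>)"
  proof
    fix y
    have "polyfun n (\<lambda>\<beta>. h * (of_nat (Suc (\<beta> i)) * c (sh i \<beta>)) + d \<beta>) y
       = h * polyfun n (\<lambda>\<beta>. of_nat (Suc (\<beta> i)) * c (sh i \<beta>)) y + polyfun n d y"
      by (simp add: polyfun_def sum.distrib sum_distrib_left algebra_simps)
    then show "Df h i (polyfun (Suc n) c) y = polyfun n (\<lambda>\<beta>. h * (of_nat (Suc (\<beta> i)) * c (sh i \<beta>)) + d \<beta>) y"
      using eq[of y] d(1) by simp
  qed
  then show ?thesis using d(2) by (intro exI[of _ "\<lambda>\<beta>. h * (of_nat (Suc (\<beta> i)) * c (sh i \<beta>)) + d \<beta>"]) auto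
qed

primrec opseq :: "('d \<Rightarrow> (real^'d::finite \<Rightarrow> real) \<Rightarrow> real^'d \<Rightarrow> real) \<Rightarrow> 'd list \<Rightarrow> (real^'d \<Rightarrow> real) \<Rightarrow> real^'d \<Rightarrow> real" where
  "opseq Op [] f = f"
| "opseq Op (i # s) f = opseq Op s (Op i f)"

primrec Fs :: "'d list \<Rightarrow> nat" where
  "Fs [] = 1"
| "Fs (i # s) = Fs s * (count_list s i + 1)"

lemma Fs_pos: "Fs s \<ge> 1"
  by (induction s) auto

definition cnt :: "'d list \<Rightarrow> 'd \<Rightarrow> nat" where "cnt s = (\<lambda>j. count_list s j)"

lemma sum_cnt: "sum (cnt s) (UNIV::'d::finite set) = length s"
proof (induction s)
  case Nil then show ?case by (simp add: cnt_def)
next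
  case (Cons i s)
  have "cnt (i # s) = (\<lambda>j. cnt s j + (if i = j then 1 else 0))" by (auto simp: cnt_def fun_eq_iff)
  then have "sum (cnt (i # s)) (UNIV::'d set) = sum (cnt s) UNIV + (\<Sum>j\<in>UNIV. if i = j then 1 else 0)"
    by (simp add: sum.distrib)
  then show ?case using Cons by simp
qed

lemma cnt_Cons: "cnt (i # s) = sh i (cnt s)"
  by (auto simp: cnt_def sh_def fun_eq_iff)

lemma opseq_top:
  assumes H: "\<And>i n c. \<exists>c'. Op i (polyfun (Suc n) c) = polyfun n c' \<and>
     (\<forall>\<beta>. sum \<beta> UNIV = n \<longrightarrow> c' \<beta> = f * of_nat (Suc (\<beta> i)) * c (sh i \<beta>))"
  shows "opseq Op s (polyfun (length s) c) = (\<lambda>y. f ^ (length s) * of_nat (Fs s) * c (cnt s))"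
proof (induction s arbitrary: c)
  case Nil then show ?case by (simp add: polyfun_0 cnt_def)
next
  case (Cons i s)
  obtain c' where c': "Op i (polyfun (Suc (length s)) c) = polyfun (length s) c'"
    "\<forall>\<beta>. sum \<beta> UNIV = length s \<longrightarrow> c' \<beta> = f * of_nat (Suc (\<beta> i)) * c (sh i \<beta>)"
    using H by blast
  have "c' (cnt s) = f * of_nat (Suc (cnt s i)) * c (cnt (i # s))"
    using c'(2) sum_cnt[of s] by (simp add: cnt_Cons)
  then show ?case using Cons[of c'] c'(1) by (simp add: cnt_def algebra_simps)
qed

lemma cnt_exists: "sum \<alpha> (UNIV::'d::finite set) = n \<Longrightarrow> \<exists>s. length s = n \<and> cnt s = \<alpha>"
proof (induction n arbitrary: \<alpha>)
  case 0
  then have "\<alpha> = (\<lambda>_. 0)" by (auto simp: fun_eq_iff)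
  then show ?case by (intro exI[of _ "[]"]) (auto simp: cnt_def)
next
  case (Suc n)
  then obtain i where i: "\<alpha> i > 0" by (metis gr0I sum.neutral_const sum.cong nat.distinct(1))
  have "sum (\<alpha>(i := \<alpha> i - 1)) (UNIV::'d set) = n" using sum_upd[of \<alpha> i "\<alpha> i - 1"] Suc.prems i by simp
  then obtain s where s: "length s = n" "cnt s = \<alpha>(i := \<alpha> i - 1)" using Suc.IH by blast
  have "cnt (i # s) = \<alpha>" using i by (auto simp: cnt_Cons s sh_def fun_eq_iff)
  then show ?case using s by (intro exI[of _ "i # s"]) auto
qed

lemma Dd_top: "\<exists>c'. Dd i (polyfun (Suc n) c) = polyfun n c' \<and>
     (\<forall>\<beta>. sum \<beta> UNIV = n \<longrightarrow> c' \<beta> = 1 * of_nat (Suc (\<beta> i)) * c (sh i \<beta>))"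
  by (intro exI[of _ "\<lambda>\<beta>. of_nat (Suc (\<beta> i)) * c (sh i \<beta>)"]) (simp add: Dd_polyfun_Suc)

lemma Dd_comp:
  assumes "is_poly_deg n P" "\<epsilon> \<noteq> 0"
  shows "Dd i (\<lambda>z. a * P ((1/\<epsilon>) *\<^sub>R (z - x))) z = a * (1/\<epsilon>) * Dd i P ((1/\<epsilon>) *\<^sub>R (z - x))"
proof -
  obtain c where P: "P = polyfun n c" using assms by (auto simp: is_poly_deg_def)
  define w where "w = (1/\<epsilon>) *\<^sub>R (z - x)"
  define g where "g = (\<lambda>s. P (w + s *\<^sub>R axis i 1))"
  have G: "(g has_real_derivative Dd i P w) (at 0)"
    unfolding g_def P Dd_polyfun by (rule poly_deriv)
  have e: "(\<lambda>t. a * P ((1/\<epsilon>) *\<^sub>R (z + t *\<^sub>R axis i 1 - x))) = (\<lambda>t. a * g (t / \<epsilon>))"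
  proof
    fix t
    have "(1/\<epsilon>) *\<^sub>R (z + t *\<^sub>R axis i 1 - x) = w + (t / \<epsilon>) *\<^sub>R axis i 1"
      using assms(2) by (simp add: w_def algebra_simps divide_inverse)
    then show "a * P ((1/\<epsilon>) *\<^sub>R (z + t *\<^sub>R axis i 1 - x)) = a * g (t / \<epsilon>)" by (simp add: g_def)
  qed
  have d1: "((\<lambda>t. t / \<epsilon>) has_real_derivative 1 / \<epsilon>) (at 0)"
    using assms(2) by (auto intro!: derivative_eq_intros)
  have G0: "(g has_real_derivative Dd i P w) (at ((\<lambda>t. t / \<epsilon>) 0))" using G by simp
  have "((\<lambda>t. g (t / \<epsilon>)) has_real_derivative Dd i P w * (1 / \<epsilon>)) (at 0)"
    using DERIV_chain2[OF G0 d1] by simp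
  then have "((\<lambda>t. a * g (t / \<epsilon>)) has_real_derivative a * (Dd i P w * (1 / \<epsilon>))) (at 0)"
    by (rule DERIV_cmult)
  then show ?thesis unfolding Dd_def[of i "\<lambda>z. a * P ((1/\<epsilon>) *\<^sub>R (z - x))"] e
    by (subst DERIV_imp_deriv) (auto simp: w_def Dd_def)
qed

lemma Dseq_comp:
  assumes "is_poly_deg n P" "\<epsilon> \<noteq> 0"
  shows "opseq Dd s (\<lambda>z. a * P ((1/\<epsilon>) *\<^sub>R (z - x))) = (\<lambda>z. a * (1/\<epsilon>) ^ (length s) * opseq Dd s P ((1/\<epsilon>) *\<^sub>R (z - x)))"
  using assms(1)
proof (induction s arbitrary: a P)
  case Nil then show ?case by simp
next
  case (Cons i s)
  have "Dd i (\<lambda>z. a * P ((1/\<epsilon>) *\<^sub>R (z - x))) = (\<lambda>z. (a * (1/\<epsilon>)) * Dd i P ((1/\<epsilon>) *\<^sub>R (z - x)))"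
    using Dd_comp[OF Cons.prems assms(2)] by auto
  then show ?case using Cons.IH[OF Dd_poly[OF Cons.prems], of "a * (1/\<epsilon>)" i] by (simp add: mult_ac)
qed

lemma lmi_iter:
  assumes lmi: "\<And>P e x0. is_poly_deg k P \<Longrightarrow> 0 < e \<Longrightarrow> e < \<epsilon>0 \<Longrightarrow> x0 \<in> K \<Longrightarrow>
      norm (grad P x0) \<le> C / e * Sup {\<bar>P y\<bar> | y. y \<in> cball x0 e \<inter> K}"
    and d: "0 < \<delta>" "\<delta> < \<epsilon>0" and C: "C \<ge> 0"
  shows "is_poly_deg k Q \<Longrightarrow> x0 \<in> K \<Longrightarrow> (\<forall>y\<in>K \<inter> cball x0 (real (length s) * \<delta>). \<bar>Q y\<bar> \<le> M)
     \<Longrightarrow> \<bar>opseq Dd s Q x0\<bar> \<le> (C / \<delta>) ^ (length s) * M"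
proof (induction s arbitrary: Q M)
  case Nil
  then show ?case by simp
next
  case (Cons i s)
  have hyp: "\<forall>y\<in>K \<inter> cball x0 (real (length s) * \<delta>). \<bar>Dd i Q y\<bar> \<le> C / \<delta> * M"
  proof
    fix y assume y: "y \<in> K \<inter> cball x0 (real (length s) * \<delta>)"
    have "Sup {\<bar>Q z\<bar> | z. z \<in> cball y \<delta> \<inter> K} \<le> M"
    proof (rule cSup_least)
      have "\<bar>Q y\<bar> \<in> {\<bar>Q z\<bar> | z. z \<in> cball y \<delta> \<inter> K}" using y d by auto
      then show "{\<bar>Q z\<bar> | z. z \<in> cball y \<delta> \<inter> K} \<noteq> {}" by blast
    next
      fix v assume "v \<in> {\<bar>Q z\<bar> | z. z \<in> cball y \<delta> \<inter> K}"
      then obtain z where z: "v = \<bar>Q z\<bar>" "z \<in> cball y \<delta>" "z \<in> K" by auto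
      have "dist x0 z \<le> dist x0 y + dist y z" by (rule dist_triangle)
      also have "\<dots> \<le> real (length s) * \<delta> + \<delta>" using y z by (auto intro: add_mono)
      finally have "z \<in> K \<inter> cball x0 (real (length (i # s)) * \<delta>)" using z by (simp add: algebra_simps)
      then show "v \<le> M" using Cons.prems(3) z by auto
    qed
    then have "C / \<delta> * Sup {\<bar>Q z\<bar> | z. z \<in> cball y \<delta> \<inter> K} \<le> C / \<delta> * M"
      using C d by (intro mult_left_mono) auto
    moreover have "\<bar>Dd i Q y\<bar> \<le> norm (grad Q y)"
      using component_le_norm_cart[of "grad Q y" i] by (simp add: grad_Dd)
    moreover have "norm (grad Q y) \<le> C / \<delta> * Sup {\<bar>Q z\<bar> | z. z \<in> cball y \<delta> \<inter> K}"
      using lmi[OF Cons.prems(1) d(1) d(2)] y by auto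
    ultimately show "\<bar>Dd i Q y\<bar> \<le> C / \<delta> * M" by linarith
  qed
  have "\<bar>opseq Dd s (Dd i Q) x0\<bar> \<le> (C / \<delta>) ^ (length s) * (C / \<delta> * M)"
    using Cons.IH[OF Dd_poly[OF Cons.prems(1)] Cons.prems(2) hyp] .
  then show ?case by (simp add: mult_ac)
qed

lemma df_iter:
  assumes "0 \<le> h"
  shows "(\<forall>y\<in>cball p (real (length s) * h). \<bar>f y\<bar> \<le> M) \<Longrightarrow> \<bar>opseq (Df h) s f p\<bar> \<le> 2 ^ (length s) * M"
proof (induction s arbitrary: f M)
  case Nil
  then show ?case by simp
next
  case (Cons i s)
  have hyp: "\<forall>y\<in>cball p (real (length s) * h). \<bar>Df h i f y\<bar> \<le> 2 * M"
  proof
    fix y assume y: "y \<in> cball p (real (length s) * h)"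
    have "dist p (y + h *\<^sub>R axis i 1) \<le> dist p y + dist y (y + h *\<^sub>R axis i 1)" by (rule dist_triangle)
    also have "dist y (y + h *\<^sub>R axis i 1) = h" using assms by (simp add: dist_norm)
    finally have "y + h *\<^sub>R axis i 1 \<in> cball p (real (length (i # s)) * h)"
      using y by (simp add: algebra_simps)
    moreover have "y \<in> cball p (real (length (i # s)) * h)" using y assms
      by (auto simp: algebra_simps)
    ultimately have "\<bar>f (y + h *\<^sub>R axis i 1)\<bar> \<le> M" "\<bar>f y\<bar> \<le> M" using Cons.prems by auto
    then show "\<bar>Df h i f y\<bar> \<le> 2 * M" by (simp add: Df_def)
  qed
  show ?case using Cons.IH[OF hyp] by (simp add: mult_ac)
qed

lemma local_bound:
  fixes K :: "(real^'d::finite) set" and c :: "('d \<Rightarrow> nat) \<Rightarrow> real"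
  assumes lmi: "\<And>P e x0. is_poly_deg k P \<Longrightarrow> 0 < e \<Longrightarrow> e < \<epsilon>0 \<Longrightarrow> x0 \<in> K \<Longrightarrow>
      norm (grad P x0) \<le> C / e * Sup {\<bar>P y\<bar> | y. y \<in> cball x0 e \<inter> K}"
    and C: "C \<ge> 0" and e: "0 < \<epsilon>" and x: "x \<in> K" and r: "0 < r"
    and small: "r * \<epsilon> / (real k + 1) < \<epsilon>0"
    and hyp: "\<forall>y\<in>Aset K x \<epsilon>. norm y \<le> r \<longrightarrow> \<bar>polyfun k c y\<bar> \<le> M"
    and s: "length s = k"
  shows "\<bar>c (cnt s)\<bar> \<le> (C * (real k + 1)) ^ k * M / r ^ k"
proof -
  define \<delta> where "\<delta> = r * \<epsilon> / (real k + 1)"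
  have d: "0 < \<delta>" "\<delta> < \<epsilon>0" using e r small by (auto simp: \<delta>_def)
  define Q where "Q = (\<lambda>z. 1 * polyfun k c ((1/\<epsilon>) *\<^sub>R (z - x)))"
  have pk: "is_poly_deg k (polyfun k c)" by (auto simp: is_poly_deg_def)
  have Qp: "is_poly_deg k Q" unfolding Q_def by (intro is_poly_scale is_poly_comp pk)
  have QM: "\<forall>z\<in>K \<inter> cball x (real (length s) * \<delta>). \<bar>Q z\<bar> \<le> M"
  proof
    fix z assume z: "z \<in> K \<inter> cball x (real (length s) * \<delta>)"
    have "real k * \<delta> \<le> r * \<epsilon>"
      using e r by (simp add: \<delta>_def field_simps)
    then have "norm (z - x) \<le> r * \<epsilon>" using z s by (auto simp: dist_norm norm_minus_commute)
    moreover have "norm ((1/\<epsilon>) *\<^sub>R (z - x)) = norm (z - x) / \<epsilon>"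
      unfolding norm_scaleR using e by simp
    ultimately have "norm ((1/\<epsilon>) *\<^sub>R (z - x)) \<le> r" using e by (simp add: divide_le_eq mult.commute)
    moreover have "(1/\<epsilon>) *\<^sub>R (z - x) \<in> Aset K x \<epsilon>" using z by (auto simp: Aset_def)
    ultimately show "\<bar>Q z\<bar> \<le> M" using hyp by (simp add: Q_def)
  qed
  have it: "\<bar>opseq Dd s Q x\<bar> \<le> (C / \<delta>) ^ (length s) * M"
    by (rule lmi_iter[OF lmi d C Qp x QM])
  have "opseq Dd s Q x = 1 * (1/\<epsilon>) ^ (length s) * opseq Dd s (polyfun k c) ((1/\<epsilon>) *\<^sub>R (x - x))"
    unfolding Q_def using Dseq_comp[OF pk, of \<epsilon> s 1 x] e by simp
  also have "\<dots> = (1/\<epsilon>) ^ k * (of_nat (Fs s) * c (cnt s))"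
    using opseq_top[OF Dd_top, of s c] s by simp
  finally have "(1/\<epsilon>) ^ k * (of_nat (Fs s) * \<bar>c (cnt s)\<bar>) \<le> (C / \<delta>) ^ k * M"
    using it s e by (simp add: abs_mult)
  then have "\<epsilon> ^ k * ((1/\<epsilon>) ^ k * (of_nat (Fs s) * \<bar>c (cnt s)\<bar>)) \<le> \<epsilon> ^ k * ((C / \<delta>) ^ k * M)"
    using e by (intro mult_left_mono) auto
  then have "of_nat (Fs s) * \<bar>c (cnt s)\<bar> \<le> (\<epsilon> * (C / \<delta>)) ^ k * M"
    using e by (simp add: power_mult_distrib power_one_over field_simps)
  moreover have eq: "\<epsilon> * (C / \<delta>) = C * (real k + 1) / r" using e r by (simp add: \<delta>_def field_simps)
  moreover have "\<bar>c (cnt s)\<bar> \<le> of_nat (Fs s) * \<bar>c (cnt s)\<bar>"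
    using Fs_pos[of s] by (simp add: mult_le_cancel_right1)
  moreover have "(\<epsilon> * (C / \<delta>)) ^ k * M = (C * (real k + 1)) ^ k * M / r ^ k"
    by (simp only: eq power_divide) simp
  ultimately show ?thesis by linarith
qed

lemma shell_bound:
  fixes K :: "(real^'d::finite) set" and c :: "('d \<Rightarrow> nat) \<Rightarrow> real"
  assumes e: "0 < \<epsilon>" and r: "4 / \<epsilon> \<le> r"
    and hyp: "\<forall>y\<in>Aset K x \<epsilon>. norm y \<le> r \<longrightarrow> \<bar>polyfun k c y\<bar> \<le> M"
    and s: "length s = k"
  shows "\<bar>c (cnt s)\<bar> \<le> (8 * (real k + 1)) ^ k * M / r ^ k"
proof -
  have r0: "0 < r" using e r by (smt (verit) divide_pos_pos)
  define h where "h = r / (4 * (real k + 1))"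
  have h: "0 < h" using r0 by (simp add: h_def)
  define p :: "real^'d" where "p = (r / 2) *\<^sub>R axis undefined 1"
  have np: "norm p = r / 2" using r0 by (simp add: p_def)
  have PM: "\<forall>y\<in>cball p (real (length s) * h). \<bar>polyfun k c y\<bar> \<le> M"
  proof
    fix y assume y: "y \<in> cball p (real (length s) * h)"
    have "real k * h \<le> r / 4" using r0 by (simp add: h_def field_simps)
    then have dy: "dist p y \<le> r / 4" using y s by simp
    have "norm p \<le> norm y + dist p y" by (metis dist_norm norm_triangle_sub norm_minus_commute dist_commute)
    then have "r / 4 \<le> norm y" using np dy by simp
    moreover have "1 / \<epsilon> \<le> r / 4" using r e by (simp add: field_simps)
    ultimately have "y \<in> Aset K x \<epsilon>" by (auto simp: Aset_def)
    moreover have "norm y \<le> norm p + dist p y" by (metis dist_norm norm_triangle_sub add.commute norm_minus_commute)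
    then have "norm y \<le> r" using np dy r0 by simp
    ultimately show "\<bar>polyfun k c y\<bar> \<le> M" using hyp by auto
  qed
  have it: "\<bar>opseq (Df h) s (polyfun k c) p\<bar> \<le> 2 ^ (length s) * M"
    using df_iter[where h=h and s=s and p=p and f="polyfun k c" and M=M] h PM by simp
  have "opseq (Df h) s (polyfun k c) p = h ^ k * of_nat (Fs s) * c (cnt s)"
    using opseq_top[of "Df h" h s c, OF Df_polyfun_Suc] s by simp
  with it s have "h ^ k * (of_nat (Fs s) * \<bar>c (cnt s)\<bar>) \<le> 2 ^ k * M"
    using h by (simp add: abs_mult mult.assoc)
  moreover have "h ^ k * \<bar>c (cnt s)\<bar> \<le> h ^ k * (of_nat (Fs s) * \<bar>c (cnt s)\<bar>)"
    using Fs_pos[of s] h by (intro mult_left_mono) (auto simp: mult_le_cancel_right1)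
  ultimately have "h ^ k * \<bar>c (cnt s)\<bar> \<le> 2 ^ k * M" by linarith
  then have "\<bar>c (cnt s)\<bar> \<le> 2 ^ k * M / h ^ k" using h by (simp add: field_simps)
  also have "2 ^ k * M / h ^ k = (2 / h) ^ k * M" by (simp add: power_divide)
  also have "2 / h = 8 * (real k + 1) / r" using r0 by (simp add: h_def field_simps)
  also have "(8 * (real k + 1) / r) ^ k * M = (8 * (real k + 1)) ^ k * M / r ^ k" by (simp add: power_divide)
  finally show ?thesis .
qed

theorem lemma7:
  fixes K :: "(real^'d::finite) set"
  assumes "compact K" and "LMI1 K"
  shows "\<forall>k. \<exists>C>0. \<forall>\<epsilon> x r c. 0 < \<epsilon> \<and> \<epsilon> < 1 \<and> x \<in> frontier K \<and> r > 0 \<longrightarrow>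
           (\<Sum>\<alpha>\<in>{\<alpha>. sum \<alpha> UNIV = k}. \<bar>c \<alpha>\<bar>)
             \<le> C / r ^ k * Sup {\<bar>polyfun k c y\<bar> | y. y \<in> Aset K x \<epsilon> \<and> norm y \<le> r}"
proof
  fix k
  obtain \<epsilon>0 cc where e0: "\<epsilon>0 > 0" and cc: "\<forall>k. cc k \<ge> (1::real)"
    and lmi0: "\<forall>k P \<epsilon> x0. is_poly_deg k P \<and> 0 < \<epsilon> \<and> \<epsilon> < \<epsilon>0 \<and> x0 \<in> K \<longrightarrow>
        norm (grad P x0) \<le> cc k / \<epsilon> * Sup {\<bar>P y\<bar> | y. y \<in> cball x0 \<epsilon> \<inter> K}"
    using assms(2) unfolding LMI1_def by blast
  define C1 where "C1 = cc k"
  have C1: "C1 \<ge> 1" using cc by (simp add: C1_def)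
  have lmi: "\<And>P e x0. is_poly_deg k P \<Longrightarrow> 0 < e \<Longrightarrow> e < \<epsilon>0 \<Longrightarrow> x0 \<in> K \<Longrightarrow>
      norm (grad P x0) \<le> C1 / e * Sup {\<bar>P y\<bar> | y. y \<in> cball x0 e \<inter> K}"
    using lmi0 by (simp add: C1_def)
  define B where "B = (C1 * (real k + 1)) ^ k + (8 * (real k + 1)) ^ k
      + (C1 * (real k + 1)) ^ k * (8 / ((real k + 1) * \<epsilon>0)) ^ k"
  have B1: "(C1 * (real k + 1)) ^ k \<ge> 0" "(8 * (real k + 1)) ^ k \<ge> (0::real)"
     "(8 / ((real k + 1) * \<epsilon>0)) ^ k \<ge> 0" using C1 e0 by auto
  have B0: "B > 0" using B1 C1 by (simp add: B_def add_pos_nonneg)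
  define N where "N = card {\<alpha>::'d \<Rightarrow> nat. sum \<alpha> UNIV = k}"
  show "\<exists>C>0. \<forall>\<epsilon> x r c. 0 < \<epsilon> \<and> \<epsilon> < 1 \<and> x \<in> frontier K \<and> r > 0 \<longrightarrow>
           (\<Sum>\<alpha>\<in>{\<alpha>. sum \<alpha> UNIV = k}. \<bar>c \<alpha>\<bar>)
             \<le> C / r ^ k * Sup {\<bar>polyfun k c y\<bar> | y. y \<in> Aset K x \<epsilon> \<and> norm y \<le> r}"
  proof (intro exI[of _ "(real N + 1) * B"] conjI allI impI)
    show "(real N + 1) * B > 0" using B0 by simp
    fix \<epsilon> r :: real and x :: "real^'d" and c :: "('d \<Rightarrow> nat) \<Rightarrow> real"
    assume a: "0 < \<epsilon> \<and> \<epsilon> < 1 \<and> x \<in> frontier K \<and> r > 0"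
    then have e: "0 < \<epsilon>" and r: "0 < r" and xf: "x \<in> frontier K" by auto
    have x: "x \<in> K" using xf assms(1) compact_imp_closed frontier_subset_closed by blast
    define S where "S = {\<bar>polyfun k c y\<bar> | y. y \<in> Aset K x \<epsilon> \<and> norm y \<le> r}"
    define M where "M = Sup S"
    have cont: "continuous_on UNIV (polyfun k c)"
      unfolding polyfun_def[abs_def] mono_def by (intro continuous_intros)
    have "bounded ((\<lambda>y. \<bar>polyfun k c y\<bar>) ` cball 0 r)"
      by (intro compact_imp_bounded compact_continuous_image continuous_intros
          continuous_on_subset[OF cont]) auto
    then have "bdd_above ((\<lambda>y. \<bar>polyfun k c y\<bar>) ` cball 0 r)" by (rule bounded_imp_bdd_above)
    moreover have "S \<subseteq> (\<lambda>y. \<bar>polyfun k c y\<bar>) ` cball 0 r" by (auto simp: S_def)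
    ultimately have bdd: "bdd_above S" by (rule bdd_above_mono)
    have hyp: "\<forall>y\<in>Aset K x \<epsilon>. norm y \<le> r \<longrightarrow> \<bar>polyfun k c y\<bar> \<le> M"
      unfolding M_def using bdd by (auto simp: S_def intro!: cSup_upper)
    have "0 \<in> Aset K x \<epsilon>" using x by (force simp: Aset_def)
    then have "\<bar>polyfun k c 0\<bar> \<le> M" using hyp r by auto
    then have M0: "M \<ge> 0" by linarith
    have key: "\<bar>c \<alpha>\<bar> \<le> B * M / r ^ k" if \<alpha>: "sum \<alpha> UNIV = k" for \<alpha>
    proof -
      obtain s where s: "length s = k" "cnt s = \<alpha>" using cnt_exists[OF \<alpha>] by blast
      have t1: "(C1 * (real k + 1)) ^ k * M / r ^ k \<le> B * M / r ^ k"
        using B1 M0 r by (intro divide_right_mono mult_right_mono) (auto simp: B_def)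
      have t2: "(8 * (real k + 1)) ^ k * M / r ^ k \<le> B * M / r ^ k"
        using B1 M0 r by (intro divide_right_mono mult_right_mono) (auto simp: B_def)
      have t3: "(C1 * (real k + 1)) ^ k * (8 / ((real k + 1) * \<epsilon>0)) ^ k * M / r ^ k \<le> B * M / r ^ k"
        using B1 M0 r by (intro divide_right_mono mult_right_mono) (auto simp: B_def)
      show ?thesis
      proof (cases "r * \<epsilon> / (real k + 1) < \<epsilon>0")
        case True
        from local_bound[OF lmi _ e x r True hyp s(1)] C1 s t1 show ?thesis by simp
      next
        case F: False
        show ?thesis
        proof (cases "4 / \<epsilon> \<le> r")
          case True
          from shell_bound[OF e True hyp s(1)] s t2 show ?thesis by simp
        next
          case False
          define r' where "r' = ((real k + 1) * (\<epsilon>0 / 2)) / \<epsilon>"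
          have r'0: "0 < r'" using e e0 by (simp add: r'_def)
          have h1: "r' * \<epsilon> = (real k + 1) * (\<epsilon>0 / 2)" using e by (simp add: r'_def)
          then have h2: "r' * \<epsilon> / (real k + 1) = \<epsilon>0 / 2"
            by (metis nonzero_mult_div_cancel_left of_nat_Suc of_nat_neq_0 add.commute)
          have sm: "r' * \<epsilon> / (real k + 1) < \<epsilon>0" unfolding h2 using e0 by simp
          have "\<epsilon>0 \<le> r * \<epsilon> / (real k + 1)" using F by simp
          then have "(real k + 1) * \<epsilon>0 \<le> r * \<epsilon>" by (simp add: field_simps)
          moreover have "(real k + 1) * (\<epsilon>0 / 2) = ((real k + 1) * \<epsilon>0) / 2" by simp
          moreover have "(real k + 1) * \<epsilon>0 \<ge> 0" using e0 by simp
          ultimately have "(real k + 1) * (\<epsilon>0 / 2) \<le> r * \<epsilon>" by linarith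
          then have "((real k + 1) * (\<epsilon>0 / 2)) / \<epsilon> \<le> (r * \<epsilon>) / \<epsilon>" using e by (intro divide_right_mono) auto
          then have rr: "r' \<le> r" using e by (simp add: r'_def)
          have hyp': "\<forall>y\<in>Aset K x \<epsilon>. norm y \<le> r' \<longrightarrow> \<bar>polyfun k c y\<bar> \<le> M"
            using hyp rr by auto
          have lb: "\<bar>c \<alpha>\<bar> \<le> (C1 * (real k + 1)) ^ k * M / r' ^ k"
            using local_bound[OF lmi _ e x r'0 sm hyp' s(1)] C1 s by simp
          have "\<epsilon> < 4 / r" using False e r by (simp add: field_simps)
          define A where "A = (real k + 1) * (\<epsilon>0 / 2)"
          have A0: "A > 0" using e0 by (simp add: A_def)
          have "1 / r' = \<epsilon> / A" by (simp add: r'_def A_def)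
          also have "\<dots> \<le> (4 / r) / A" using \<open>\<epsilon> < 4 / r\<close> A0 by (intro divide_right_mono) auto
          also have "(4 / r) / A = (8 / ((real k + 1) * \<epsilon>0)) / r"
            using r e0 by (simp add: A_def field_simps)
          finally have "1 / r' \<le> (8 / ((real k + 1) * \<epsilon>0)) / r" .
          then have "(1 / r') ^ k \<le> ((8 / ((real k + 1) * \<epsilon>0)) / r) ^ k"
            using r'0 by (intro power_mono) auto
          then have "1 / r' ^ k \<le> (8 / ((real k + 1) * \<epsilon>0)) ^ k / r ^ k"
            by (simp add: power_divide power_mult_distrib)
          then have "(C1 * (real k + 1)) ^ k * M * (1 / r' ^ k)
              \<le> (C1 * (real k + 1)) ^ k * M * ((8 / ((real k + 1) * \<epsilon>0)) ^ k / r ^ k)"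
            using B1 M0 by (intro mult_left_mono) auto
          then have "\<bar>c \<alpha>\<bar> \<le> (C1 * (real k + 1)) ^ k * (8 / ((real k + 1) * \<epsilon>0)) ^ k * M / r ^ k"
            using lb by (simp add: mult_ac)
          then show ?thesis using t3 by linarith
        qed
      qed
    qed
    have "(\<Sum>\<alpha>\<in>{\<alpha>. sum \<alpha> UNIV = k}. \<bar>c \<alpha>\<bar>) \<le> real N * (B * M / r ^ k)"
      unfolding N_def by (rule sum_bounded_above) (use key in auto)
    also have "\<dots> \<le> (real N + 1) * (B * M / r ^ k)"
      using B0 M0 r by (intro mult_right_mono) auto
    also have "\<dots> = (real N + 1) * B / r ^ k * M" by simp
    finally show "(\<Sum>\<alpha>\<in>{\<alpha>. sum \<alpha> UNIV = k}. \<bar>c \<alpha>\<bar>)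
             \<le> (real N + 1) * B / r ^ k * Sup {\<bar>polyfun k c y\<bar> | y. y \<in> Aset K x \<epsilon> \<and> norm y \<le> r}"
      by (simp add: M_def S_def)
  qed
qed

end
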